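(* Let $m>n$ be coprime positive integers, $\lambda\in X$, $\Lambda=x(\lambda)$ and $\alpha=\epsilon_i-\delta_j$ ($i\in[n]$, $j\in[m]$). If $\Lambda\in\Pi_{-\alpha}$, then either $\lambda\in X_{-\alpha}$, or $\alpha=\epsilon_1-\delta_m$ and $\lambda_n=\lambda'_m=0$.
   Context: $X$ is the set of partitions $\lambda=(\lambda_1\ge\dots\ge\lambda_n\ge0)$ with $\lambda_1\le m$, drawn in an $n\times m$ rectangle with rows $\epsilon_1,\dots,\epsilon_n$ top to bottom and columns $\delta_1,\dots,\delta_m$; the diagram consists of boxes $\epsilon_i-\delta_j$ with $j\le\lambda_{n+1-i}$; $\lambda'_j=\#\{i:\lambda_i\ge j\}$. $X_{-\alpha}$ is the set of $\lambda$ for which the box $\alpha$ is an inner corner (in $\lambda$, and removing it gives an element of $X$). $x(\lambda)=(a_1,\dots,a_n|b_1,\dots,b_m)$ with $a_i=m(n-i)+n\lambda_{n+1-i}$, $b_j=n(j-1)+m\lambda'_j$. $\Pi_{-\alpha}=\{\Lambda: a_i-b_j=n-m\}$. *)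

theory Defs
  imports Main
begin

text \<open>Partitions lam = (lam 1 >= ... >= lam n >= 0) with lam 1 <= m, represented as
  functions nat => nat that vanish outside {1..n}.\<close>
definition partX :: "nat \<Rightarrow> nat \<Rightarrow> (nat \<Rightarrow> nat) set" where
  "partX n m = {lam. (\<forall>k. (k = 0 \<or> n < k) \<longrightarrow> lam k = 0)
                    \<and> (\<forall>k. 1 \<le> k \<and> k < n \<longrightarrow> lam (Suc k) \<le> lam k)
                    \<and> lam 1 \<le> m}"

definition conjp :: "nat \<Rightarrow> (nat \<Rightarrow> nat) \<Rightarrow> nat \<Rightarrow> nat" where
  "conjp n lam j = card {i \<in> {1..n}. j \<le> lam i}"

text \<open>Young diagram in the n x m rectangle: box (i,j) stands for eps_i - delta_j,
  present iff j <= lam (n+1-i).\<close>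
definition diagram :: "nat \<Rightarrow> nat \<Rightarrow> (nat \<Rightarrow> nat) \<Rightarrow> (nat \<times> nat) set" where
  "diagram n m lam = {(i, j). i \<in> {1..n} \<and> j \<in> {1..m} \<and> j \<le> lam (n + 1 - i)}"

definition Xminus :: "nat \<Rightarrow> nat \<Rightarrow> nat \<times> nat \<Rightarrow> (nat \<Rightarrow> nat) set" where
  "Xminus n m \<alpha> = {lam. lam \<in> partX n m \<and> \<alpha> \<in> diagram n m lam
                      \<and> (\<exists>mu \<in> partX n m. diagram n m mu = diagram n m lam - {\<alpha>})}"

text \<open>Coordinates of x(lam) = (a_1..a_n | b_1..b_m).\<close>
definition acoord :: "nat \<Rightarrow> nat \<Rightarrow> (nat \<Rightarrow> nat) \<Rightarrow> nat \<Rightarrow> int" where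
  "acoord n m lam i = int m * (int n - int i) + int n * int (lam (n + 1 - i))"

definition bcoord :: "nat \<Rightarrow> nat \<Rightarrow> (nat \<Rightarrow> nat) \<Rightarrow> nat \<Rightarrow> int" where
  "bcoord n m lam j = int n * (int j - 1) + int m * int (conjp n lam j)"

definition inPi :: "nat \<Rightarrow> nat \<Rightarrow> (nat \<Rightarrow> nat) \<Rightarrow> nat \<times> nat \<Rightarrow> bool" where
  "inPi n m lam \<alpha> = (acoord n m lam (fst \<alpha>) - bcoord n m lam (snd \<alpha>) = int n - int m)"

end

theory Submission
  imports Defs
begin

lemma partX_mono:
  assumes "lam \<in> partX n m" "1 \<le> k" "k \<le> l" "l \<le> n"
  shows "lam l \<le> lam k"
  using assms(3,4)
proof (induction l rule: dec_induct)
  case base then show ?case by simp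
next
  case (step l)
  have "lam (Suc l) \<le> lam l" using assms(1,2) step by (auto simp: partX_def)
  then show ?case using step by simp
qed

lemma conjp_le: "conjp n lam j \<le> n"
proof -
  have "card {i \<in> {1..n}. j \<le> lam i} \<le> card {1..n}" by (rule card_mono) auto
  then show ?thesis by (simp add: conjp_def)
qed

lemma conjp_ge:
  assumes "lam \<in> partX n m" "1 \<le> s" "s \<le> n" "j \<le> lam s"
  shows "s \<le> conjp n lam j"
proof -
  have "{1..s} \<subseteq> {i \<in> {1..n}. j \<le> lam i}"
    using partX_mono[OF assms(1)] assms by (auto intro: order_trans)
  then have "card {1..s} \<le> card {i \<in> {1..n}. j \<le> lam i}" by (rule card_mono[rotated]) auto
  then show ?thesis by (simp add: conjp_def)
qed

theorem lemma4p6: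
  fixes n m i j :: nat and lam :: "nat \<Rightarrow> nat"
  assumes "0 < n" and "n < m" and "coprime m n"
    and "lam \<in> partX n m"
    and "i \<in> {1..n}" and "j \<in> {1..m}"
    and "inPi n m lam (i, j)"
  shows "lam \<in> Xminus n m (i, j) \<or>
         ((i, j) = (1, m) \<and> lam n = 0 \<and> conjp n lam m = 0)"
proof -
  define r where "r = n + 1 - i"
  define c where "c = conjp n lam j"
  have r1: "1 \<le> r" "r \<le> n" using assms(5) by (auto simp: r_def)
  have cn: "c \<le> n" using conjp_le c_def by simp
  have lr: "lam r \<le> m" using partX_mono[OF assms(4), of 1 r] r1 assms(4) by (auto simp: partX_def)
  have eq: "int m * (int r - int c) = int n * (int j - int (lam r))"
    using assms(7) r1 assms(5) unfolding inPi_def acoord_def bcoord_def c_def r_def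
    by (simp add: algebra_simps of_nat_diff)
  have "int m dvd int n * (int j - int (lam r))" using eq by (metis dvd_triv_left)
  moreover have "coprime (int m) (int n)" using assms(3) by simp
  ultimately have "int m dvd (int j - int (lam r))" using coprime_dvd_mult_right_iff by blast
  then obtain t where t: "int j - int (lam r) = int m * t" by (auto elim: dvdE)
  have "t \<ge> 0"
  proof (rule ccontr)
    assume "\<not> t \<ge> 0" then have "int m * t \<le> - int m" using mult_left_mono[of t "-1" "int m"] by simp
    then show False using t assms(6) lr by simp
  qed
  moreover have "t \<le> 1"
  proof (rule ccontr)
    assume "\<not> t \<le> 1" then have "int m * t \<ge> int m * 2" using assms(2) by (intro mult_left_mono) auto
    moreover have "j \<le> m" using assms(6) by simp
    ultimately show False using t assms(1,2) by linarith
  qed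
  ultimately have "t = 0 \<or> t = 1" by auto
  then show ?thesis
  proof
    assume "t = 1"
    then have j: "j = m" "lam r = 0" using t assms(6) lr by auto
    then have "int m * (int r - int c) = int n * int m" using eq by simp
    then have "int r - int c = int n" using assms(2) by (simp add: mult.commute)
    then have "r = n" "c = 0" using r1 cn by auto
    then show ?thesis using j r_def assms(5) c_def by auto
  next
    assume "t = 0"
    then have jl: "j = lam r" using t by simp
    then have "int m * (int r - int c) = 0" using eq by simp
    then have rc: "r = c" using assms(2) by simp
    have strict: "lam (Suc r) < lam r" if "r < n"
    proof (rule ccontr)
      assume "\<not> ?thesis"
      then have "Suc r \<le> c" unfolding c_def using conjp_ge[OF assms(4), of "Suc r" j] that jl by auto
      then show False using rc by simp
    qed
    define mu where "mu = lam(r := lam r - 1)"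
    have P: "\<forall>k. (k = 0 \<or> n < k) \<longrightarrow> lam k = 0" "\<forall>k. 1 \<le> k \<and> k < n \<longrightarrow> lam (Suc k) \<le> lam k" "lam 1 \<le> m"
      using assms(4) unfolding partX_def by auto
    have mu1: "\<forall>k. (k = 0 \<or> n < k) \<longrightarrow> mu k = 0" using P(1) r1 unfolding mu_def by auto
    have mu2: "mu (Suc k) \<le> mu k" if "1 \<le> k" "k < n" for k
    proof (cases "k = r")
      case True then show ?thesis using strict that unfolding mu_def by auto
    next
      case False
      then show ?thesis using P(2) that unfolding mu_def by (cases "Suc k = r") auto
    qed
    have mu3: "mu 1 \<le> m" using P(3) unfolding mu_def by auto
    have mu: "mu \<in> partX n m" using mu1 mu2 mu3 unfolding partX_def by blast
    have "diagram n m mu = diagram n m lam - {(i, j)}"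
      unfolding diagram_def mu_def using assms(5) jl r_def by (auto split: if_splits)
    moreover have "(i, j) \<in> diagram n m lam"
      unfolding diagram_def using assms(5,6) jl r_def by auto
    ultimately show ?thesis using mu assms(4) unfolding Xminus_def by blast
  qed
qed

end
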